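(* Let $q,r,\mu,\nu$ be positive integers. For all $z\in\mathbb{C}$: \begin{align*} \mathcal{A}(z)&=(\widetilde U_\mu(z)\otimes I_q)\,\mathcal{A}(0)\,(\widetilde W_\nu(z)\otimes I_r),\\ \mathcal{M}(z)&=(I_\mu\otimes\widetilde U_q(z))\,\mathcal{M}(0)\,(I_\nu\otimes\widetilde W_r(z)),\\ \mathcal{M}(z)&=(\widetilde U_\mu(-z)\otimes U_q(z))\,\mathcal{A}(z)\,(\widetilde W_\nu(-z)\otimes W_r(z)),\\ \mathcal{N}(z)&=(U_\mu(z)^{-1}\otimes U_q(z))\,\mathcal{A}(z)\,(W_\nu(z)^{-1}\otimes W_r(z)),\\ \mathcal{N}(z)&=(I_\mu\otimes\widetilde U_q(z))\,\mathcal{N}(0)\,(I_\nu\otimes\widetilde W_r(z)). \end{align*}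
   Context: Matrix indices start at $0$. $u(z)=(1,\dots,z^{q-1})^\top$, $w(z)=(1,\dots,z^{r-1})$, $M(z)=u(z)w(z)$; $\mathcal{M}(z)$ (resp. $\mathcal{N}(z)$) is the $\mu q\times\nu r$ block matrix with $(i,j)$ block $M^{(i+j)}(z)$ (resp. $\frac{1}{i!j!}M^{(i+j)}(z)$), $i<\mu$, $j<\nu$. For $k\ge0$, $A^k(z)\in\mathbb{C}^{q\times r}$ has entries $\frac{k!}{a!b!(k-a-b)!}z^{k-a-b}$ (zero if $a+b>k$), and $\mathcal{A}(z)$ is the $\mu q\times\nu r$ block matrix with $(i,j)$ block $A^{i+j}(z)$. For any $n\ge1$: $U_n(z)\in\mathbb{C}^{n\times n}$ is the matrix $(u_n(z),u_n'(z),\dots,u_n^{(n-1)}(z))$ with $u_n(z)=(1,z,\dots,z^{n-1})^\top$; $W_n(z)=U_n(z)^\top$ is the matrix whose $i$-th row is $w_n^{(i)}(z)$ with $w_n(z)=(1,z,\dots,z^{n-1})$; $\widetilde U_n(z)$ has entries $\binom{i}{j}z^{i-j}$ ($0$ for $j>i$), i.e. its $j$-th column is $u_n^{(j)}(z)/j!$; $\widetilde W_n(z)=\widetilde U_n(z)^\top$, i.e. its $i$-th row is $w_n^{(i)}(z)/i!$. *)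

theory Defs
  imports "HOL-Analysis.Analysis" "Jordan_Normal_Form.Matrix"
begin

definition kron :: "complex mat \<Rightarrow> complex mat \<Rightarrow> complex mat" where
  "kron A B = mat (dim_row A * dim_row B) (dim_col A * dim_col B)
     (\<lambda>(I,J). A $$ (I div dim_row B, J div dim_col B) * B $$ (I mod dim_row B, J mod dim_col B))"

definition mat_inv :: "complex mat \<Rightarrow> complex mat" where
  "mat_inv A = (THE B. B \<in> carrier_mat (dim_row A) (dim_row A) \<and> inverts_mat A B \<and> inverts_mat B A)"

definition block_mat :: "nat \<Rightarrow> nat \<Rightarrow> nat \<Rightarrow> nat \<Rightarrow> (nat \<Rightarrow> nat \<Rightarrow> complex mat) \<Rightarrow> complex mat" where
  "block_mat \<mu> \<nu> q r Blk = mat (\<mu> * q) (\<nu> * r)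
     (\<lambda>(I,J). Blk (I div q) (J div r) $$ (I mod q, J mod r))"

text \<open>k-th derivative M^(k)(z) of M(z) = u(z) w(z), i.e. entries (a,b) are the k-th derivative of z^(a+b).\<close>
definition Mder :: "nat \<Rightarrow> nat \<Rightarrow> nat \<Rightarrow> complex \<Rightarrow> complex mat" where
  "Mder q r k z = mat q r (\<lambda>(a,b). (deriv ^^ k) (\<lambda>x. x ^ (a+b)) z)"

definition Mcal :: "nat \<Rightarrow> nat \<Rightarrow> nat \<Rightarrow> nat \<Rightarrow> complex \<Rightarrow> complex mat" where
  "Mcal q r \<mu> \<nu> z = block_mat \<mu> \<nu> q r (\<lambda>i j. Mder q r (i+j) z)"

definition Ncal :: "nat \<Rightarrow> nat \<Rightarrow> nat \<Rightarrow> nat \<Rightarrow> complex \<Rightarrow> complex mat" where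
  "Ncal q r \<mu> \<nu> z = block_mat \<mu> \<nu> q r
     (\<lambda>i j. (1 / (of_nat (fact i) * of_nat (fact j))) \<cdot>\<^sub>m Mder q r (i+j) z)"

definition Amat :: "nat \<Rightarrow> nat \<Rightarrow> nat \<Rightarrow> complex \<Rightarrow> complex mat" where
  "Amat q r k z = mat q r (\<lambda>(a,b). if a + b \<le> k then
      of_nat (fact k) / (of_nat (fact a) * of_nat (fact b) * of_nat (fact (k - a - b))) * z ^ (k - a - b)
    else 0)"

definition Acal :: "nat \<Rightarrow> nat \<Rightarrow> nat \<Rightarrow> nat \<Rightarrow> complex \<Rightarrow> complex mat" where
  "Acal q r \<mu> \<nu> z = block_mat \<mu> \<nu> q r (\<lambda>i j. Amat q r (i+j) z)"

definition Umat :: "nat \<Rightarrow> complex \<Rightarrow> complex mat" where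
  "Umat n z = mat n n (\<lambda>(i,j). (deriv ^^ j) (\<lambda>x. x ^ i) z)"

definition Wmat :: "nat \<Rightarrow> complex \<Rightarrow> complex mat" where
  "Wmat n z = transpose_mat (Umat n z)"

definition Ut :: "nat \<Rightarrow> complex \<Rightarrow> complex mat" where
  "Ut n z = mat n n (\<lambda>(i,j). if j \<le> i then of_nat (i choose j) * z ^ (i - j) else 0)"

definition Wt :: "nat \<Rightarrow> complex \<Rightarrow> complex mat" where
  "Wt n z = transpose_mat (Ut n z)"

end

theory Submission
  imports Defs
begin


lemma mult_entry:
  assumes "A \<in> carrier_mat n m" "B \<in> carrier_mat m p" "i < n" "j < p"
  shows "(A * B) $$ (i,j) = (\<Sum>k<m. A $$ (i,k) * B $$ (k,j))"
  using assms by (auto simp: scalar_prod_def atLeast0LessThan intro!: sum.cong)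

lemma sum_split_divmod:
  fixes g :: "nat \<Rightarrow> nat \<Rightarrow> 'a::comm_monoid_add"
  assumes "n > 0"
  shows "(\<Sum>K<m*n. g (K div n) (K mod n)) = (\<Sum>k<m. \<Sum>c<n. g k c)"
proof (induction m)
  case 0 then show ?case by simp
next
  case (Suc m)
  have "{..<Suc m * n} = {..<m*n} \<union> (\<lambda>c. m*n+c) ` {..<n}" 
  proof
    show "{..<Suc m * n} \<subseteq> {..<m*n} \<union> (\<lambda>c. m*n+c) ` {..<n}"
    proof
      fix K assume K: "K \<in> {..<Suc m * n}"
      show "K \<in> {..<m*n} \<union> (\<lambda>c. m*n+c) ` {..<n}"
      proof (cases "K < m*n")
        case False
        then have "K = m*n + (K - m*n)" "K - m*n < n" using K by auto
        then show ?thesis by blast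
      qed simp
    qed
  qed auto
  moreover have "inj_on (\<lambda>c. m*n+c) {..<n}" by (auto simp: inj_on_def)
  moreover have "{..<m*n} \<inter> (\<lambda>c. m*n+c) ` {..<n} = {}" by auto
  ultimately have "(\<Sum>K<Suc m*n. g (K div n) (K mod n)) = (\<Sum>K<m*n. g (K div n) (K mod n)) + (\<Sum>c<n. g ((m*n+c) div n) ((m*n+c) mod n))"
    by (simp add: sum.union_disjoint sum.reindex)
  also have "(\<Sum>c<n. g ((m*n+c) div n) ((m*n+c) mod n)) = (\<Sum>c<n. g m c)"
    using assms by (intro sum.cong) auto
  finally show ?case using Suc by simp
qed

lemma kron_carrier: "A \<in> carrier_mat m n \<Longrightarrow> B \<in> carrier_mat pp ss \<Longrightarrow> kron A B \<in> carrier_mat (m*pp) (n* ss)"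
  by (auto simp: kron_def)

lemma kron_entry: "A \<in> carrier_mat m n \<Longrightarrow> B \<in> carrier_mat pp ss \<Longrightarrow> I < m*pp \<Longrightarrow> J < n* ss \<Longrightarrow>
  kron A B $$ (I,J) = A $$ (I div pp, J div ss) * B $$ (I mod pp, J mod ss)"
  by (auto simp: kron_def)

lemma kron_mult:
  assumes "A \<in> carrier_mat m n" "B \<in> carrier_mat p s" "C \<in> carrier_mat n k" "D \<in> carrier_mat s t"
    "p > 0" "s > 0" "t > 0"
  shows "kron A B * kron C D = kron (A*C) (B*D)"
proof (rule eq_matI)
  fix I J assume IJ: "I < dim_row (kron (A*C) (B*D))" "J < dim_col (kron (A*C) (B*D))"
  then have I: "I < m*p" and J: "J < k*t" using assms by (auto simp: kron_def)
  have Id: "I div p < m" "I mod p < p" using I assms by (auto simp: less_mult_imp_div_less)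
  have Jd: "J div t < k" "J mod t < t" using J assms by (auto simp: less_mult_imp_div_less)
  have "(kron A B * kron C D) $$ (I,J) = (\<Sum>K<n* s. kron A B $$ (I,K) * kron C D $$ (K,J))"
    by (rule mult_entry[OF kron_carrier[OF assms(1,2)] kron_carrier[OF assms(3,4)] I J])
  also have "\<dots> = (\<Sum>K<n* s. (\<lambda>a c. A $$ (I div p, a) * B $$ (I mod p, c) * (C $$ (a, J div t) * D $$ (c, J mod t))) (K div s) (K mod s))"
    apply (intro sum.cong refl)
    apply (subst kron_entry[OF assms(1,2) I], simp)
    apply (subst kron_entry[OF assms(3,4) _ J], simp)
    apply simp
    done
  also have "\<dots> = (\<Sum>a<n. \<Sum>c<s. A $$ (I div p, a) * B $$ (I mod p, c) * (C $$ (a, J div t) * D $$ (c, J mod t)))"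
    by (rule sum_split_divmod[OF assms(6)])
  also have "\<dots> = (\<Sum>a<n. A $$ (I div p, a) * C $$ (a, J div t)) * (\<Sum>c<s. B $$ (I mod p, c) * D $$ (c, J mod t))"
    unfolding sum_product by (intro sum.cong refl) (simp add: mult_ac)
  also have "\<dots> = (A*C) $$ (I div p, J div t) * (B*D) $$ (I mod p, J mod t)"
    using mult_entry[OF assms(1,3) Id(1) Jd(1)] mult_entry[OF assms(2,4) Id(2) Jd(2)] by simp
  also have "\<dots> = kron (A*C) (B*D) $$ (I,J)"
    by (rule kron_entry[symmetric]) (use assms I J in auto)
  finally show "(kron A B * kron C D) $$ (I,J) = kron (A*C) (B*D) $$ (I,J)" .
qed (use assms in \<open>auto simp: kron_def\<close>)

lemma deriv_pow_iter:
  "(deriv ^^ k) (\<lambda>x::complex. x ^ n) = (\<lambda>x. of_nat (fact k * (n choose k)) * x ^ (n - k))"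
proof (induction k)
  case 0 then show ?case by simp
next
  case (Suc k)
  have e: "fact (Suc k) * (n choose Suc k) = fact k * (n choose k) * (n - k)"
  proof -
    have "Suc k * (n choose Suc k) = (n - k) * (n choose k)"
      by (simp only: binomial_absorption binomial_absorb_comp)
    moreover have "fact (Suc k) = Suc k * (fact k :: nat)" by simp
    ultimately show ?thesis by (metis mult.assoc mult.commute)
  qed
  have d: "deriv (\<lambda>x::complex. c * x ^ m) x = c * (of_nat m * x ^ (m - 1))" for c x m
    by (rule DERIV_imp_deriv, rule DERIV_cmult, rule DERIV_power[OF DERIV_ident, THEN DERIV_cong]) simp
  show ?case
    apply (rule ext)
    apply (simp only: funpow.simps o_apply Suc)
    apply (subst d)
    apply (simp only: e)
    apply (simp only: of_nat_mult mult.assoc diff_diff_left Suc_eq_plus1)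
    done
qed

lemma block_mat_carrier: "block_mat m n q r B \<in> carrier_mat (m*q) (n*r)"
  by (simp add: block_mat_def)

lemma block_mat_entry: "I < m*q \<Longrightarrow> J < n*r \<Longrightarrow> block_mat m n q r B $$ (I,J) = B (I div q) (J div r) $$ (I mod q, J mod r)"
  by (simp add: block_mat_def)

lemma divmod_bounds: "(I::nat) < m * q \<Longrightarrow> I div q < m \<and> I mod q < q"
proof -
  assume a: "I < m * q"
  then have "q > 0" by (cases q) auto
  then show ?thesis using a by (simp add: less_mult_imp_div_less)
qed

lemma triple_entry:
  assumes "Q \<in> carrier_mat q1 q2" "X \<in> carrier_mat q2 r2" "S \<in> carrier_mat r2 r1" "a < q1" "b < r1"
  shows "(Q * X * S) $$ (a,b) = (\<Sum>d<r2. \<Sum>c<q2. Q $$ (a,c) * X $$ (c,d) * S $$ (d,b))"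
proof -
  have "(Q * X * S) $$ (a,b) = (\<Sum>d<r2. (Q*X) $$ (a,d) * S $$ (d,b))"
    by (rule mult_entry[OF mult_carrier_mat[OF assms(1,2)] assms(3-5)])
  also have "\<dots> = (\<Sum>d<r2. (\<Sum>c<q2. Q $$ (a,c) * X $$ (c,d)) * S $$ (d,b))"
    by (intro sum.cong refl, subst mult_entry[OF assms(1,2) assms(4)]) auto
  finally show ?thesis by (simp add: sum_distrib_right)
qed

lemma kron_block:
  assumes P: "P \<in> carrier_mat m1 m2" and Q: "Q \<in> carrier_mat q1 q2"
    and R: "R \<in> carrier_mat n2 n1" and S: "S \<in> carrier_mat r2 r1"
    and pos: "q1 > 0" "q2 > 0" "r1 > 0" "r2 > 0"
    and B: "\<And>k l. k < m2 \<Longrightarrow> l < n2 \<Longrightarrow> B k l \<in> carrier_mat q2 r2"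
  shows "kron P Q * block_mat m2 n2 q2 r2 B * kron R S = block_mat m1 n1 q1 r1
     (\<lambda>i j. mat q1 r1 (\<lambda>(a,b). \<Sum>k<m2. \<Sum>l<n2. P $$ (i,k) * R $$ (l,j) * (Q * B k l * S) $$ (a,b)))"
proof (rule eq_matI)
  fix I J assume IJ: "I < dim_row (block_mat m1 n1 q1 r1
     (\<lambda>i j. mat q1 r1 (\<lambda>(a,b). \<Sum>k<m2. \<Sum>l<n2. P $$ (i,k) * R $$ (l,j) * (Q * B k l * S) $$ (a,b))))"
    "J < dim_col (block_mat m1 n1 q1 r1
     (\<lambda>i j. mat q1 r1 (\<lambda>(a,b). \<Sum>k<m2. \<Sum>l<n2. P $$ (i,k) * R $$ (l,j) * (Q * B k l * S) $$ (a,b))))"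
  then have I: "I < m1*q1" and J: "J < n1*r1" by (auto simp: block_mat_def)
  note Id = divmod_bounds[OF I] and Jd = divmod_bounds[OF J]
  define i a j b where "i = I div q1" "a = I mod q1" "j = J div r1" "b = J mod r1"
  have KPQ: "kron P Q \<in> carrier_mat (m1*q1) (m2*q2)" by (rule kron_carrier[OF P Q])
  have KRS: "kron R S \<in> carrier_mat (n2*r2) (n1*r1)" by (rule kron_carrier[OF R S])
  have BM: "block_mat m2 n2 q2 r2 B \<in> carrier_mat (m2*q2) (n2*r2)" by (rule block_mat_carrier)
  have "(kron P Q * block_mat m2 n2 q2 r2 B * kron R S) $$ (I,J) =
     (\<Sum>L<n2*r2. (\<Sum>K<m2*q2. kron P Q $$ (I,K) * block_mat m2 n2 q2 r2 B $$ (K,L)) * kron R S $$ (L,J))"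
    by (rule triple_entry[OF KPQ BM KRS I J, THEN trans]) (simp add: sum_distrib_right)
  also have "\<dots> = (\<Sum>L<n2*r2. (\<lambda>l d. (\<Sum>K<m2*q2. (\<lambda>k c. P $$ (i,k) * Q $$ (a,c) * B k l $$ (c,d)) (K div q2) (K mod q2)) * (R $$ (l,j) * S $$ (d,b))) (L div r2) (L mod r2))"
  proof (intro sum.cong refl)
    fix L assume L: "L \<in> {..<n2*r2}"
    show "(\<Sum>K<m2*q2. kron P Q $$ (I,K) * block_mat m2 n2 q2 r2 B $$ (K,L)) * kron R S $$ (L,J) =
       (\<lambda>l d. (\<Sum>K<m2*q2. (\<lambda>k c. P $$ (i,k) * Q $$ (a,c) * B k l $$ (c,d)) (K div q2) (K mod q2)) * (R $$ (l,j) * S $$ (d,b))) (L div r2) (L mod r2)"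
      apply (subst kron_entry[OF R S _ J], use L in simp)
      apply (rule arg_cong2[where f="(*)"])
       apply (rule sum.cong[OF refl])
       apply (subst kron_entry[OF P Q I], simp)
       apply (subst block_mat_entry, simp, use L in simp)
       apply (simp add: i_a_j_b_def)
      apply (simp add: i_a_j_b_def)
      done
  qed
  also have "\<dots> = (\<Sum>l<n2. \<Sum>d<r2. (\<Sum>k<m2. \<Sum>c<q2. P $$ (i,k) * Q $$ (a,c) * B k l $$ (c,d)) * (R $$ (l,j) * S $$ (d,b)))"
  proof -
    have inner: "(\<Sum>K<m2*q2. P $$ (i, K div q2) * Q $$ (a, K mod q2) * B (K div q2) l $$ (K mod q2, d)) = (\<Sum>k<m2. \<Sum>c<q2. P $$ (i, k) * Q $$ (a, c) * B k l $$ (c, d))" for l d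
      by (rule sum_split_divmod[OF pos(2), where g="\<lambda>k c. P $$ (i, k) * Q $$ (a, c) * B k l $$ (c, d)"])
    show ?thesis
      apply (subst sum_split_divmod[OF pos(4), where g="\<lambda>l d. (\<Sum>K<m2*q2. P $$ (i, K div q2) * Q $$ (a, K mod q2) * B (K div q2) l $$ (K mod q2, d)) * (R $$ (l, j) * S $$ (d, b))"])
      apply (simp only: inner)
      done
  qed
  also have "\<dots> = (\<Sum>l<n2. \<Sum>d<r2. \<Sum>k<m2. \<Sum>c<q2. P $$ (i,k) * Q $$ (a,c) * B k l $$ (c,d) * (R $$ (l,j) * S $$ (d,b)))"
    by (simp only: sum_distrib_right)
  also have "\<dots> = (\<Sum>l<n2. \<Sum>k<m2. \<Sum>d<r2. \<Sum>c<q2. P $$ (i,k) * Q $$ (a,c) * B k l $$ (c,d) * (R $$ (l,j) * S $$ (d,b)))"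
    by (rule sum.cong[OF refl], rule sum.swap)
  also have "\<dots> = (\<Sum>l<n2. \<Sum>k<m2. \<Sum>d<r2. \<Sum>c<q2. P $$ (i,k) * R $$ (l,j) * (Q $$ (a,c) * B k l $$ (c,d) * S $$ (d,b)))"
    by (intro sum.cong refl) (simp only: mult_ac)
  also have "\<dots> = (\<Sum>k<m2. \<Sum>l<n2. P $$ (i,k) * R $$ (l,j) * (\<Sum>d<r2. \<Sum>c<q2. Q $$ (a,c) * B k l $$ (c,d) * S $$ (d,b)))"
    by (rule trans[OF sum.swap]) (simp only: sum_distrib_left)
  also have "\<dots> = (\<Sum>k<m2. \<Sum>l<n2. P $$ (i,k) * R $$ (l,j) * (Q * B k l * S) $$ (a,b))"
    apply (intro sum.cong refl)
    apply (subst triple_entry[OF Q B S])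
    using Id Jd by (auto simp: i_a_j_b_def)
  also have "\<dots> = block_mat m1 n1 q1 r1
     (\<lambda>i j. mat q1 r1 (\<lambda>(a,b). \<Sum>k<m2. \<Sum>l<n2. P $$ (i,k) * R $$ (l,j) * (Q * B k l * S) $$ (a,b))) $$ (I,J)"
    using I J Id Jd by (simp add: block_mat_entry i_a_j_b_def)
  finally show "(kron P Q * block_mat m2 n2 q2 r2 B * kron R S) $$ (I,J) = block_mat m1 n1 q1 r1
     (\<lambda>i j. mat q1 r1 (\<lambda>(a,b). \<Sum>k<m2. \<Sum>l<n2. P $$ (i,k) * R $$ (l,j) * (Q * B k l * S) $$ (a,b))) $$ (I,J)" .
qed (use P Q R S in \<open>auto simp: kron_def block_mat_def\<close>)

lemma vand_nat:
  assumes "i < K" "j < L"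
  shows "(\<Sum>k<K. \<Sum>l<L. if k + l = n then (i choose k) * (j choose l) else 0) = (i + j) choose n"
proof -
  define g where "g k = (if k \<le> n then (i choose k) * (j choose (n - k)) else 0)" for k
  have inner: "(\<Sum>l<L. if k + l = n then (i choose k) * (j choose l) else 0) = g k" for k
  proof (cases "k \<le> n")
    case True
    have "(\<Sum>l<L. if k + l = n then (i choose k) * (j choose l) else 0) = (\<Sum>l<L. if l = n - k then (i choose k) * (j choose l) else 0)"
      using True by (intro sum.cong refl) auto
    also have "\<dots> = (if n - k < L then (i choose k) * (j choose (n-k)) else 0)"
      by (simp add: sum.delta)
    also have "\<dots> = g k" using assms(2) True by (auto simp: g_def)
    finally show ?thesis .
  next
    case False then show ?thesis by (auto simp: g_def intro!: sum.neutral)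
  qed
  have z: "g k = 0" if "k > i \<or> k > n" for k using that by (auto simp: g_def)
  have "(\<Sum>k<K. \<Sum>l<L. if k + l = n then (i choose k) * (j choose l) else 0) = (\<Sum>k<K. g k)"
    by (simp only: inner)
  also have "\<dots> = (\<Sum>k\<le>i+n. g k)"
  proof -
    have "(\<Sum>k<K. g k) = (\<Sum>k\<le>i. g k)"
      by (rule sum.mono_neutral_right) (use assms z in auto)
    also have "\<dots> = (\<Sum>k\<le>i+n. g k)"
      by (rule sum.mono_neutral_left) (use z in auto)
    finally show ?thesis .
  qed
  also have "\<dots> = (\<Sum>k\<le>n. g k)"
    by (rule sum.mono_neutral_right) (use z in auto)
  also have "\<dots> = (\<Sum>k\<le>n. (i choose k) * (j choose (n - k)))"
    by (intro sum.cong refl) (auto simp: g_def)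
  also have "\<dots> = (i + j) choose n" by (rule vandermonde)
  finally show ?thesis .
qed

lemma vsum:
  fixes z c :: complex
  assumes "i < K" "j < L"
  shows "(\<Sum>k<K. \<Sum>l<L. of_nat (i choose k) * z ^ (i - k) * (of_nat (j choose l) * z ^ (j - l)) * (if k + l = n then c else 0))
    = of_nat ((i + j) choose n) * z ^ (i + j - n) * c"
proof -
  have e: "of_nat (i choose k) * z ^ (i - k) * (of_nat (j choose l) * z ^ (j - l)) * (if k + l = n then c else 0)
     = of_nat (if k + l = n then (i choose k) * (j choose l) else 0) * (z ^ (i + j - n) * c)" for k l
  proof (cases "k \<le> i \<and> l \<le> j \<and> k + l = n")
    case True
    then have "z ^ (i - k) * z ^ (j - l) = z ^ (i + j - n)" by (simp add: power_add[symmetric])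
    then show ?thesis using True by (simp add: mult_ac)
  next
    case False
    then show ?thesis by auto
  qed
  have "(\<Sum>k<K. \<Sum>l<L. of_nat (i choose k) * z ^ (i - k) * (of_nat (j choose l) * z ^ (j - l)) * (if k + l = n then c else 0))
    = (\<Sum>k<K. \<Sum>l<L. of_nat (if k + l = n then (i choose k) * (j choose l) else 0) * (z ^ (i + j - n) * c))"
    by (simp only: e)
  also have "\<dots> = of_nat (\<Sum>k<K. \<Sum>l<L. if k + l = n then (i choose k) * (j choose l) else 0) * (z ^ (i + j - n) * c)"
    by (simp only: sum_distrib_right of_nat_sum)
  also have "\<dots> = of_nat ((i + j) choose n) * z ^ (i + j - n) * c"
    by (simp only: vand_nat[OF assms] mult.assoc)
  finally show ?thesis .
qed

lemma Ut_carrier: "Ut n z \<in> carrier_mat n n" by (simp add: Ut_def)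
lemma Wt_carrier: "Wt n z \<in> carrier_mat n n" by (simp add: Wt_def Ut_def)
lemma Umat_carrier: "Umat n z \<in> carrier_mat n n" by (simp add: Umat_def)
lemma Wmat_carrier: "Wmat n z \<in> carrier_mat n n" by (simp add: Wmat_def Umat_def)
lemma Amat_carrier: "Amat q r k z \<in> carrier_mat q r" by (simp add: Amat_def)
lemma Mder_carrier: "Mder q r k z \<in> carrier_mat q r" by (simp add: Mder_def)

lemma dims[simp]: "dim_row (Ut n z) = n" "dim_col (Ut n z) = n" "dim_row (Wt n z) = n" "dim_col (Wt n z) = n"
  "dim_row (Umat n z) = n" "dim_col (Umat n z) = n" "dim_row (Wmat n z) = n" "dim_col (Wmat n z) = n"
  "dim_row (Mder q r k z) = q" "dim_col (Mder q r k z) = r" "dim_row (Amat q r k z) = q" "dim_col (Amat q r k z) = r"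
  by (simp_all add: Ut_def Wt_def Umat_def Wmat_def Mder_def Amat_def)

lemma Ut_entry: "i < n \<Longrightarrow> j < n \<Longrightarrow> Ut n z $$ (i,j) = of_nat (i choose j) * z ^ (i - j)"
  by (simp add: Ut_def)
lemma Wt_entry: "i < n \<Longrightarrow> j < n \<Longrightarrow> Wt n z $$ (i,j) = of_nat (j choose i) * z ^ (j - i)"
  by (simp add: Wt_def Ut_def)
lemma Umat_entry: "i < n \<Longrightarrow> j < n \<Longrightarrow> Umat n z $$ (i,j) = of_nat (fact j * (i choose j)) * z ^ (i - j)"
  by (simp add: Umat_def deriv_pow_iter)
lemma Wmat_entry: "i < n \<Longrightarrow> j < n \<Longrightarrow> Wmat n z $$ (i,j) = of_nat (fact i * (j choose i)) * z ^ (j - i)"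
  by (simp add: Wmat_def Umat_def deriv_pow_iter)
lemma Mder_entry: "a < q \<Longrightarrow> b < r \<Longrightarrow> Mder q r k z $$ (a,b) = of_nat (fact k * ((a + b) choose k)) * z ^ (a + b - k)"
  by (simp add: Mder_def deriv_pow_iter)
lemma Mder0_entry: "a < q \<Longrightarrow> b < r \<Longrightarrow> Mder q r k 0 $$ (a,b) = (if a + b = k then of_nat (fact k) else 0)"
  by (auto simp: Mder_entry)
lemma Amat_entry: "a < q \<Longrightarrow> b < r \<Longrightarrow> Amat q r k z $$ (a,b) = (if a + b \<le> k then
      of_nat (fact k) / (of_nat (fact a) * of_nat (fact b) * of_nat (fact (k - a - b))) * z ^ (k - a - b)
    else 0)"
  by (simp add: Amat_def)
lemma Amat0_entry: "a < q \<Longrightarrow> b < r \<Longrightarrow> Amat q r k 0 $$ (a,b) = (if a + b = k then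
      of_nat (fact k) / (of_nat (fact a) * of_nat (fact b)) else 0)"
  by (auto simp: Amat_entry)

lemma Ut_mult: "Ut n s * Ut n t = Ut n (s + t)"
proof (rule eq_matI)
  fix i j assume "i < dim_row (Ut n (s + t))" "j < dim_col (Ut n (s + t))"
  then have ij: "i < n" "j < n" by (auto simp: Ut_def)
  have "(Ut n s * Ut n t) $$ (i,j) = (\<Sum>k<n. of_nat (i choose k) * s ^ (i - k) * (of_nat (k choose j) * t ^ (k - j)))"
    by (subst mult_entry[OF Ut_carrier Ut_carrier ij]) (use ij in \<open>simp add: Ut_entry\<close>)
  also have "\<dots> = of_nat (i choose j) * (s + t) ^ (i - j)"
  proof (cases "j \<le> i")
    case True
    define f where "f k = of_nat (i choose k) * s ^ (i - k) * (of_nat (k choose j) * t ^ (k - j))" for k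
    have "(\<Sum>k<n. f k) = (\<Sum>k\<in>{j..i}. f k)"
      by (rule sum.mono_neutral_right) (use ij in \<open>auto simp: f_def\<close>)
    also have "\<dots> = (\<Sum>m\<in>{0..i-j}. f (m + j))"
      using True sum.shift_bounds_cl_nat_ivl[of f 0 j "i - j"] by simp
    also have "\<dots> = (\<Sum>m\<le>i-j. of_nat (i choose j) * (of_nat ((i - j) choose m) * t ^ m * s ^ (i - j - m)))"
    proof (intro sum.cong)
      fix m assume m: "m \<in> {..i-j}"
      have "(i choose (m + j)) * ((m + j) choose j) = (i choose j) * ((i - j) choose m)"
        using choose_mult[of j "m + j" i] m True by simp
      then have "(of_nat (i choose (m + j)) :: complex) * of_nat ((m + j) choose j) = of_nat (i choose j) * of_nat ((i - j) choose m)"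
        by (metis of_nat_mult)
      moreover have "i - (m + j) = i - j - m" by simp
      ultimately show "f (m + j) = of_nat (i choose j) * (of_nat ((i - j) choose m) * t ^ m * s ^ (i - j - m))"
        unfolding f_def by (simp add: mult_ac)
    qed (auto simp: atLeast0AtMost)
    also have "\<dots> = of_nat (i choose j) * (t + s) ^ (i - j)"
      by (simp only: binomial_ring sum_distrib_left)
    finally show ?thesis unfolding f_def by (simp add: add.commute)
  next
    case False
    then have z: "of_nat (i choose k) * s ^ (i - k) * (of_nat (k choose j) * t ^ (k - j)) = (0::complex)" for k
      by (cases "k \<le> i") auto
    have "(\<Sum>k<n. of_nat (i choose k) * s ^ (i - k) * (of_nat (k choose j) * t ^ (k - j))) = (0::complex)"
      by (simp only: z sum.neutral_const)
    then show ?thesis using False by simp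
  qed
  also have "\<dots> = Ut n (s + t) $$ (i,j)" using ij by (simp add: Ut_entry)
  finally show "(Ut n s * Ut n t) $$ (i,j) = Ut n (s + t) $$ (i,j)" .
qed (auto simp: Ut_def)

lemma Ut0: "Ut n 0 = 1\<^sub>m n"
  by (rule eq_matI) (auto simp: Ut_def)

lemma Wt_mult: "Wt n t * Wt n s = Wt n (s + t)"
  unfolding Wt_def using transpose_mult[OF Ut_carrier Ut_carrier, of n s t] Ut_mult by simp

lemma Wt0: "Wt n 0 = 1\<^sub>m n"
  by (simp add: Wt_def Ut0)

lemma block_mat_cong:
  assumes "\<And>i j a b. i < m \<Longrightarrow> j < n \<Longrightarrow> a < q \<Longrightarrow> b < r \<Longrightarrow> B i j $$ (a,b) = B' i j $$ (a,b)"
  shows "block_mat m n q r B = block_mat m n q r B'"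
proof (rule eq_matI)
  fix I J assume "I < dim_row (block_mat m n q r B')" "J < dim_col (block_mat m n q r B')"
  then have I: "I < m * q" and J: "J < n * r" by (auto simp: block_mat_def)
  show "block_mat m n q r B $$ (I,J) = block_mat m n q r B' $$ (I,J)"
    using I J divmod_bounds[OF I] divmod_bounds[OF J] by (simp add: block_mat_entry assms)
qed (auto simp: block_mat_def)

lemma diag_collapse:
  fixes X :: "nat \<Rightarrow> nat \<Rightarrow> complex"
  assumes "i < K" "j < L"
  shows "(\<Sum>k<K. \<Sum>l<L. (if i = k then p else 0) * (if l = j then p' else 0) * X k l) = p * p' * X i j"
proof -
  have "(\<Sum>k<K. \<Sum>l<L. (if i = k then p else 0) * (if l = j then p' else 0) * X k l) =
        (\<Sum>k<K. if k = i then (\<Sum>l<L. if l = j then p * p' * X k l else 0) else 0)"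
  proof (rule sum.cong[OF refl])
    fix k
    show "(\<Sum>l<L. (if i = k then p else 0) * (if l = j then p' else 0) * X k l) =
        (if k = i then (\<Sum>l<L. if l = j then p * p' * X k l else 0) else 0)"
    proof (cases "k = i")
      case True then show ?thesis by (simp only: True simp_thms if_True) (intro sum.cong refl, simp)
    qed auto
  qed
  also have "\<dots> = (\<Sum>l<L. if l = j then p * p' * X i l else 0)"
    by (simp only: sum.delta[OF finite_lessThan]) (simp add: assms)
  also have "\<dots> = p * p' * X i j"
    by (simp only: sum.delta[OF finite_lessThan]) (simp add: assms)
  finally show ?thesis .
qed

lemma core_Ut:
  assumes "a < q" "b < r"
  shows "(Ut q z * Mder q r k 0 * Wt r z) $$ (a,b) = Mder q r k z $$ (a,b)"
proof -
  have "(Ut q z * Mder q r k 0 * Wt r z) $$ (a,b) = (\<Sum>d<r. \<Sum>c<q. Ut q z $$ (a,c) * Mder q r k 0 $$ (c,d) * Wt r z $$ (d,b))"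
    by (rule triple_entry[OF Ut_carrier Mder_carrier Wt_carrier assms])
  also have "\<dots> = (\<Sum>d<r. \<Sum>c<q. of_nat (a choose c) * z ^ (a - c) * (of_nat (b choose d) * z ^ (b - d)) * (if c + d = k then of_nat (fact k) else 0))"
    by (intro sum.cong refl) (use assms in \<open>simp add: Ut_entry Wt_entry Mder0_entry mult_ac\<close>)
  also have "\<dots> = (\<Sum>c<q. \<Sum>d<r. of_nat (a choose c) * z ^ (a - c) * (of_nat (b choose d) * z ^ (b - d)) * (if c + d = k then of_nat (fact k) else 0))"
    by (rule sum.swap)
  also have "\<dots> = of_nat ((a + b) choose k) * z ^ (a + b - k) * of_nat (fact k)"
    by (rule vsum[OF assms])
  also have "\<dots> = Mder q r k z $$ (a,b)" using assms by (simp add: Mder_entry mult_ac)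
  finally show ?thesis .
qed

lemma core_U:
  assumes "a < q" "b < r"
  shows "(Umat q z * Amat q r k 0 * Wmat r z) $$ (a,b) = Mder q r k z $$ (a,b)"
proof -
  have t: "Umat q z $$ (a,c) * Amat q r k 0 $$ (c,d) * Wmat r z $$ (d,b) =
     of_nat (a choose c) * z ^ (a - c) * (of_nat (b choose d) * z ^ (b - d)) * (if c + d = k then of_nat (fact k) else 0)"
    if "c < q" "d < r" for c d
  proof (cases "c + d = k")
    case True
    have "(of_nat (fact c) :: complex) \<noteq> 0" "(of_nat (fact d) :: complex) \<noteq> 0" by auto
    then show ?thesis using that assms True
      by (simp add: Umat_entry Wmat_entry Amat0_entry field_simps)
  next
    case False then show ?thesis using that assms by (simp add: Amat0_entry)
  qed
  have "(Umat q z * Amat q r k 0 * Wmat r z) $$ (a,b) = (\<Sum>d<r. \<Sum>c<q. Umat q z $$ (a,c) * Amat q r k 0 $$ (c,d) * Wmat r z $$ (d,b))"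
    by (rule triple_entry[OF Umat_carrier Amat_carrier Wmat_carrier assms])
  also have "\<dots> = (\<Sum>d<r. \<Sum>c<q. of_nat (a choose c) * z ^ (a - c) * (of_nat (b choose d) * z ^ (b - d)) * (if c + d = k then of_nat (fact k) else 0))"
    by (intro sum.cong refl) (simp add: t)
  also have "\<dots> = (\<Sum>c<q. \<Sum>d<r. of_nat (a choose c) * z ^ (a - c) * (of_nat (b choose d) * z ^ (b - d)) * (if c + d = k then of_nat (fact k) else 0))"
    by (rule sum.swap)
  also have "\<dots> = of_nat ((a + b) choose k) * z ^ (a + b - k) * of_nat (fact k)"
    by (rule vsum[OF assms])
  also have "\<dots> = Mder q r k z $$ (a,b)" using assms by (simp add: Mder_entry mult_ac)
  finally show ?thesis .
qed

lemma one_mid: "1\<^sub>m q * X * 1\<^sub>m r = X" if "X \<in> carrier_mat q r" for X :: "complex mat"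
  using that by simp

lemma core_A:
  assumes "i < m" "j < n" "a < q" "b < r"
  shows "(\<Sum>k<m. \<Sum>l<n. Ut m z $$ (i,k) * Wt n z $$ (l,j) * (1\<^sub>m q * Amat q r (k+l) 0 * 1\<^sub>m r) $$ (a,b))
     = Amat q r (i+j) z $$ (a,b)"
proof -
  define c :: complex where "c = of_nat (fact (a+b)) / (of_nat (fact a) * of_nat (fact b))"
  have "(\<Sum>k<m. \<Sum>l<n. Ut m z $$ (i,k) * Wt n z $$ (l,j) * (1\<^sub>m q * Amat q r (k+l) 0 * 1\<^sub>m r) $$ (a,b))
     = (\<Sum>k<m. \<Sum>l<n. of_nat (i choose k) * z ^ (i - k) * (of_nat (j choose l) * z ^ (j - l)) * (if k + l = a + b then c else 0))"
    by (intro sum.cong refl) (use assms in \<open>auto simp: one_mid[OF Amat_carrier] Ut_entry Wt_entry Amat0_entry c_def simp del: index_mult_mat\<close>)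
  also have "\<dots> = of_nat ((i + j) choose (a + b)) * z ^ (i + j - (a + b)) * c"
    by (rule vsum[OF assms(1,2)])
  also have "\<dots> = Amat q r (i+j) z $$ (a,b)"
  proof (cases "a + b \<le> i + j")
    case True
    have "(of_nat ((i + j) choose (a + b)) :: complex) = of_nat (fact (i+j)) / (of_nat (fact (a+b)) * of_nat (fact (i + j - (a + b))))"
      using binomial_fact[OF True] by simp
    moreover have "(of_nat (fact (a+b)) :: complex) \<noteq> 0" "(of_nat (fact a) :: complex) \<noteq> 0" "(of_nat (fact b) :: complex) \<noteq> 0"
       "(of_nat (fact (i + j - (a + b))) :: complex) \<noteq> 0" by auto
    ultimately show ?thesis using True assms by (simp add: Amat_entry c_def field_simps diff_diff_left)
  next
    case False then show ?thesis using assms by (simp add: Amat_entry)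
  qed
  finally show ?thesis .
qed

definition diagm :: "nat \<Rightarrow> (nat \<Rightarrow> complex) \<Rightarrow> complex mat" where
  "diagm n p = mat n n (\<lambda>(i,j). if i = j then p i else 0)"

lemma diagm_carrier: "diagm n p \<in> carrier_mat n n" by (simp add: diagm_def)

lemma one_diagm: "1\<^sub>m n = diagm n (\<lambda>_. 1)"
  by (rule eq_matI) (auto simp: diagm_def)

lemma diagm_transpose: "transpose_mat (diagm n p) = diagm n p"
  by (rule eq_matI) (auto simp: diagm_def)

lemma diagm_mult: "diagm n p * diagm n p' = diagm n (\<lambda>i. p i * p' i)"
proof (rule eq_matI)
  fix i j assume "i < dim_row (diagm n (\<lambda>i. p i * p' i))" "j < dim_col (diagm n (\<lambda>i. p i * p' i))"
  then have ij: "i < n" "j < n" by (auto simp: diagm_def)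
  have "(diagm n p * diagm n p') $$ (i,j) = (\<Sum>k<n. (if i = k then p i else 0) * (if k = j then p' k else 0))"
    by (subst mult_entry[OF diagm_carrier diagm_carrier ij]) (use ij in \<open>simp add: diagm_def\<close>)
  also have "\<dots> = (\<Sum>k<n. if k = i then (if i = j then p i * p' i else 0) else 0)"
    by (intro sum.cong refl) auto
  also have "\<dots> = diagm n (\<lambda>i. p i * p' i) $$ (i,j)"
    using ij by (simp only: sum.delta[OF finite_lessThan]) (simp add: diagm_def)
  finally show "(diagm n p * diagm n p') $$ (i,j) = diagm n (\<lambda>i. p i * p' i) $$ (i,j)" .
qed (auto simp: diagm_def)

lemma kron_diag_block:
  assumes Q: "Q \<in> carrier_mat q1 q2" and S: "S \<in> carrier_mat r2 r1"
    and pos: "q1 > 0" "q2 > 0" "r1 > 0" "r2 > 0"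
    and B: "\<And>k l. k < m \<Longrightarrow> l < n \<Longrightarrow> B k l \<in> carrier_mat q2 r2"
  shows "kron (diagm m p) Q * block_mat m n q2 r2 B * kron (diagm n p') S = block_mat m n q1 r1
     (\<lambda>i j. mat q1 r1 (\<lambda>(a,b). p i * p' j * (Q * B i j * S) $$ (a,b)))"
proof -
  have "kron (diagm m p) Q * block_mat m n q2 r2 B * kron (diagm n p') S = block_mat m n q1 r1
     (\<lambda>i j. mat q1 r1 (\<lambda>(a,b). \<Sum>k<m. \<Sum>l<n. diagm m p $$ (i,k) * diagm n p' $$ (l,j) * (Q * B k l * S) $$ (a,b)))"
    by (rule kron_block[OF diagm_carrier Q diagm_carrier S pos B])
  also have "\<dots> = block_mat m n q1 r1 (\<lambda>i j. mat q1 r1 (\<lambda>(a,b). p i * p' j * (Q * B i j * S) $$ (a,b)))"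
  proof (rule block_mat_cong)
    fix i j a b assume ij: "i < m" "j < n" "a < q1" "b < r1"
    have "(\<Sum>k<m. \<Sum>l<n. diagm m p $$ (i,k) * diagm n p' $$ (l,j) * (Q * B k l * S) $$ (a,b))
       = (\<Sum>k<m. \<Sum>l<n. (if i = k then p i else 0) * (if l = j then p' j else 0) * (Q * B k l * S) $$ (a,b))"
      by (intro sum.cong refl) (use ij in \<open>auto simp: diagm_def\<close>)
    also have "\<dots> = p i * p' j * (Q * B i j * S) $$ (a,b)"
      by (rule diag_collapse[OF ij(1,2)])
    finally show "mat q1 r1 (\<lambda>(a,b). \<Sum>k<m. \<Sum>l<n. diagm m p $$ (i,k) * diagm n p' $$ (l,j) * (Q * B k l * S) $$ (a,b)) $$ (a,b)
       = mat q1 r1 (\<lambda>(a,b). p i * p' j * (Q * B i j * S) $$ (a,b)) $$ (a,b)"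
      using ij by simp
  qed
  finally show ?thesis .
qed

lemma kron_one_block:
  assumes Q: "Q \<in> carrier_mat q1 q2" and S: "S \<in> carrier_mat r2 r1"
    and pos: "q1 > 0" "q2 > 0" "r1 > 0" "r2 > 0"
    and B: "\<And>k l. k < m \<Longrightarrow> l < n \<Longrightarrow> B k l \<in> carrier_mat q2 r2"
  shows "kron (1\<^sub>m m) Q * block_mat m n q2 r2 B * kron (1\<^sub>m n) S = block_mat m n q1 r1 (\<lambda>i j. Q * B i j * S)"
proof -
  have "kron (1\<^sub>m m) Q * block_mat m n q2 r2 B * kron (1\<^sub>m n) S = block_mat m n q1 r1
     (\<lambda>i j. mat q1 r1 (\<lambda>(a,b). 1 * 1 * (Q * B i j * S) $$ (a,b)))"
    unfolding one_diagm by (rule kron_diag_block[OF Q S pos B])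
  also have "\<dots> = block_mat m n q1 r1 (\<lambda>i j. Q * B i j * S)"
    by (rule block_mat_cong) simp
  finally show ?thesis .
qed

lemma Acal_carrier: "Acal q r m n z \<in> carrier_mat (m*q) (n*r)"
  by (simp add: Acal_def block_mat_carrier)

lemma P1:
  assumes "q > 0" "r > 0"
  shows "Acal q r m n z = kron (Ut m z) (1\<^sub>m q) * Acal q r m n 0 * kron (Wt n z) (1\<^sub>m r)"
proof -
  have "kron (Ut m z) (1\<^sub>m q) * Acal q r m n 0 * kron (Wt n z) (1\<^sub>m r) = block_mat m n q r
     (\<lambda>i j. mat q r (\<lambda>(a,b). \<Sum>k<m. \<Sum>l<n. Ut m z $$ (i,k) * Wt n z $$ (l,j) * (1\<^sub>m q * Amat q r (k+l) 0 * 1\<^sub>m r) $$ (a,b)))"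
    unfolding Acal_def by (rule kron_block[OF Ut_carrier one_carrier_mat Wt_carrier one_carrier_mat assms(1) assms(1) assms(2) assms(2)]) (rule Amat_carrier)
  also have "\<dots> = Acal q r m n z"
    unfolding Acal_def
  proof (rule block_mat_cong)
    fix i j a b assume ij: "i < m" "j < n" "a < q" "b < r"
    show "mat q r (\<lambda>(a,b). \<Sum>k<m. \<Sum>l<n. Ut m z $$ (i,k) * Wt n z $$ (l,j) * (1\<^sub>m q * Amat q r (k+l) 0 * 1\<^sub>m r) $$ (a,b)) $$ (a,b) = Amat q r (i+j) z $$ (a,b)"
      using core_A[OF ij, of z] ij by simp
  qed
  finally show ?thesis by simp
qed

lemma P2:
  assumes "q > 0" "r > 0"
  shows "Mcal q r m n z = kron (1\<^sub>m m) (Ut q z) * Mcal q r m n 0 * kron (1\<^sub>m n) (Wt r z)"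
proof -
  have "kron (1\<^sub>m m) (Ut q z) * Mcal q r m n 0 * kron (1\<^sub>m n) (Wt r z) = block_mat m n q r
     (\<lambda>i j. Ut q z * Mder q r (i+j) 0 * Wt r z)"
    unfolding Mcal_def by (rule kron_one_block[OF Ut_carrier Wt_carrier assms(1) assms(1) assms(2) assms(2)]) (rule Mder_carrier)
  also have "\<dots> = Mcal q r m n z"
    unfolding Mcal_def
  proof (rule block_mat_cong)
    fix i j a b assume ij: "i < m" "j < n" "a < q" "b < r"
    show "(Ut q z * Mder q r (i+j) 0 * Wt r z) $$ (a,b) = Mder q r (i+j) z $$ (a,b)"
      by (rule core_Ut[OF ij(3,4)])
  qed
  finally show ?thesis by simp
qed

lemma P5:
  assumes "q > 0" "r > 0"
  shows "Ncal q r m n z = kron (1\<^sub>m m) (Ut q z) * Ncal q r m n 0 * kron (1\<^sub>m n) (Wt r z)"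
proof -
  have "kron (1\<^sub>m m) (Ut q z) * Ncal q r m n 0 * kron (1\<^sub>m n) (Wt r z) = block_mat m n q r
     (\<lambda>i j. Ut q z * ((1 / (of_nat (fact i) * of_nat (fact j))) \<cdot>\<^sub>m Mder q r (i+j) 0) * Wt r z)"
    unfolding Ncal_def by (rule kron_one_block[OF Ut_carrier Wt_carrier assms(1) assms(1) assms(2) assms(2)]) (rule smult_carrier_mat[OF Mder_carrier])
  also have "\<dots> = Ncal q r m n z"
    unfolding Ncal_def
  proof (rule block_mat_cong)
    fix i j a b assume ij: "i < m" "j < n" "a < q" "b < r"
    have "Ut q z * ((1 / (of_nat (fact i) * of_nat (fact j))) \<cdot>\<^sub>m Mder q r (i+j) 0) * Wt r z
      = (1 / (of_nat (fact i) * of_nat (fact j))) \<cdot>\<^sub>m (Ut q z * Mder q r (i+j) 0 * Wt r z)"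
      by (simp add: mult_smult_distrib[OF Ut_carrier Mder_carrier] mult_smult_assoc_mat[OF mult_carrier_mat[OF Ut_carrier Mder_carrier] Wt_carrier])
    then show "(Ut q z * ((1 / (of_nat (fact i) * of_nat (fact j))) \<cdot>\<^sub>m Mder q r (i+j) 0) * Wt r z) $$ (a,b)
      = ((1 / (of_nat (fact i) * of_nat (fact j))) \<cdot>\<^sub>m Mder q r (i+j) z) $$ (a,b)"
      using ij core_Ut[of a q b r z "i+j"] by simp
  qed
  finally show ?thesis by simp
qed

lemma assoc5:
  fixes A B C D E :: "complex mat"
  assumes A: "A \<in> carrier_mat n1 n2" and B: "B \<in> carrier_mat n2 n2" and C: "C \<in> carrier_mat n2 n3"
    and D: "D \<in> carrier_mat n3 n3" and E: "E \<in> carrier_mat n3 n4"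
  shows "A * (B * C * D) * E = (A * B) * C * (D * E)"
proof -
  have 1: "B*C*D = B*(C*D)" by (rule assoc_mult_mat[OF B C D])
  have 2: "A*(B*(C*D)) = A*B*(C*D)" by (rule assoc_mult_mat[OF A B mult_carrier_mat[OF C D], symmetric])
  have 3: "A*B*(C*D)*E = A*B*(C*D*E)" by (rule assoc_mult_mat[OF mult_carrier_mat[OF A B] mult_carrier_mat[OF C D] E])
  have 4: "C*D*E = C*(D*E)" by (rule assoc_mult_mat[OF C D E])
  have 5: "A*B*C*(D*E) = A*B*(C*(D*E))" by (rule assoc_mult_mat[OF mult_carrier_mat[OF A B] C mult_carrier_mat[OF D E]])
  show ?thesis unfolding 1 2 3 4 5 ..
qed

lemma P3:
  assumes q: "q > 0" and r: "r > 0"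
  shows "Mcal q r m n z = kron (Ut m (-z)) (Umat q z) * Acal q r m n z * kron (Wt n (-z)) (Wmat r z)"
proof -
  have K12: "kron (Ut m (-z)) (Umat q z) * kron (Ut m z) (1\<^sub>m q) = kron (1\<^sub>m m) (Umat q z)"
    by (simp add: kron_mult[OF Ut_carrier Umat_carrier Ut_carrier one_carrier_mat q q q] Ut_mult Ut0)
  have K34: "kron (Wt n z) (1\<^sub>m r) * kron (Wt n (-z)) (Wmat r z) = kron (1\<^sub>m n) (Wmat r z)"
    by (simp add: kron_mult[OF Wt_carrier one_carrier_mat Wt_carrier Wmat_carrier r r r] Wt_mult Wt0)
  have "kron (Ut m (-z)) (Umat q z) * Acal q r m n z * kron (Wt n (-z)) (Wmat r z)
     = kron (Ut m (-z)) (Umat q z) * (kron (Ut m z) (1\<^sub>m q) * Acal q r m n 0 * kron (Wt n z) (1\<^sub>m r)) * kron (Wt n (-z)) (Wmat r z)"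
    by (simp only: P1[OF q r, of m n z, symmetric])
  also have "\<dots> = (kron (Ut m (-z)) (Umat q z) * kron (Ut m z) (1\<^sub>m q)) * Acal q r m n 0 * (kron (Wt n z) (1\<^sub>m r) * kron (Wt n (-z)) (Wmat r z))"
    by (rule assoc5[OF kron_carrier[OF Ut_carrier Umat_carrier] kron_carrier[OF Ut_carrier one_carrier_mat] Acal_carrier
        kron_carrier[OF Wt_carrier one_carrier_mat] kron_carrier[OF Wt_carrier Wmat_carrier]])
  also have "\<dots> = kron (1\<^sub>m m) (Umat q z) * Acal q r m n 0 * kron (1\<^sub>m n) (Wmat r z)"
    by (simp only: K12 K34)
  also have "\<dots> = block_mat m n q r (\<lambda>i j. Umat q z * Amat q r (i+j) 0 * Wmat r z)"
    unfolding Acal_def by (rule kron_one_block[OF Umat_carrier Wmat_carrier q q r r]) (rule Amat_carrier)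
  also have "\<dots> = Mcal q r m n z"
    unfolding Mcal_def
  proof (rule block_mat_cong)
    fix i j a b assume ij: "i < m" "j < n" "a < q" "b < r"
    show "(Umat q z * Amat q r (i+j) 0 * Wmat r z) $$ (a,b) = Mder q r (i+j) z $$ (a,b)"
      by (rule core_U[OF ij(3,4)])
  qed
  finally show ?thesis by simp
qed

definition Dm :: "nat \<Rightarrow> complex mat" where "Dm n = diagm n (\<lambda>i. of_nat (fact i))"
definition Dinv :: "nat \<Rightarrow> complex mat" where "Dinv n = diagm n (\<lambda>i. 1 / of_nat (fact i))"
definition Xi :: "nat \<Rightarrow> complex \<Rightarrow> complex mat" where "Xi n z = Dinv n * Ut n (-z)"

lemma Dm_carrier: "Dm n \<in> carrier_mat n n" by (simp add: Dm_def diagm_carrier)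
lemma Dinv_carrier: "Dinv n \<in> carrier_mat n n" by (simp add: Dinv_def diagm_carrier)
lemma Xi_carrier: "Xi n z \<in> carrier_mat n n" by (simp add: Xi_def mult_carrier_mat[OF Dinv_carrier Ut_carrier])

lemma Dm_Dinv: "Dm n * Dinv n = 1\<^sub>m n"
  unfolding Dm_def Dinv_def diagm_mult one_diagm by simp
lemma Dinv_Dm: "Dinv n * Dm n = 1\<^sub>m n"
  unfolding Dm_def Dinv_def diagm_mult one_diagm by simp

lemma Umat_Dm: "Umat n z = Ut n z * Dm n"
proof (rule eq_matI)
  fix i j assume "i < dim_row (Ut n z * Dm n)" "j < dim_col (Ut n z * Dm n)"
  then have ij: "i < n" "j < n" using Dm_carrier[of n] by auto
  have "(Ut n z * Dm n) $$ (i,j) = (\<Sum>k<n. Ut n z $$ (i,k) * Dm n $$ (k,j))"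
    by (rule mult_entry[OF Ut_carrier Dm_carrier ij])
  also have "\<dots> = (\<Sum>k<n. if k = j then Ut n z $$ (i,k) * of_nat (fact k) else 0)"
    by (intro sum.cong refl) (use ij in \<open>auto simp: Dm_def diagm_def\<close>)
  also have "\<dots> = Ut n z $$ (i,j) * of_nat (fact j)"
    using ij by (simp only: sum.delta[OF finite_lessThan]) simp
  also have "\<dots> = Umat n z $$ (i,j)" using ij by (simp add: Ut_entry Umat_entry mult_ac)
  finally show "Umat n z $$ (i,j) = (Ut n z * Dm n) $$ (i,j)" by simp
qed (auto simp: Dm_def diagm_def)

lemma U_Xi: "Umat n z * Xi n z = 1\<^sub>m n"
proof -
  have "Umat n z * Xi n z = Ut n z * Dm n * (Dinv n * Ut n (-z))" by (simp add: Umat_Dm Xi_def)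
  also have "\<dots> = Ut n z * ((Dm n * Dinv n) * Ut n (-z))"
    by (simp only: assoc_mult_mat[OF Ut_carrier Dm_carrier mult_carrier_mat[OF Dinv_carrier Ut_carrier]]
       assoc_mult_mat[OF Dm_carrier Dinv_carrier Ut_carrier])
  also have "\<dots> = 1\<^sub>m n" by (simp add: Dm_Dinv Ut_mult Ut0)
  finally show ?thesis .
qed

lemma Xi_U: "Xi n z * Umat n z = 1\<^sub>m n"
proof -
  have "Xi n z * Umat n z = Dinv n * Ut n (-z) * (Ut n z * Dm n)" by (simp add: Umat_Dm Xi_def)
  also have "\<dots> = Dinv n * ((Ut n (-z) * Ut n z) * Dm n)"
    by (simp only: assoc_mult_mat[OF Dinv_carrier Ut_carrier mult_carrier_mat[OF Ut_carrier Dm_carrier]]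
       assoc_mult_mat[OF Ut_carrier Ut_carrier Dm_carrier])
  also have "\<dots> = 1\<^sub>m n" using Dm_carrier[of n] by (simp add: Dinv_Dm Ut_mult Ut0)
  finally show ?thesis .
qed

lemma mat_inv_eq:
  assumes A: "A \<in> carrier_mat n n" and X: "X \<in> carrier_mat n n" and AX: "A * X = 1\<^sub>m n" and XA: "X * A = 1\<^sub>m n"
  shows "mat_inv A = X"
  unfolding mat_inv_def
proof (rule the_equality)
  show "X \<in> carrier_mat (dim_row A) (dim_row A) \<and> inverts_mat A X \<and> inverts_mat X A"
    using A X AX XA by (auto simp: inverts_mat_def)
next
  fix B assume "B \<in> carrier_mat (dim_row A) (dim_row A) \<and> inverts_mat A B \<and> inverts_mat B A"
  then have B: "B \<in> carrier_mat n n" and BA: "B * A = 1\<^sub>m n" using A by (auto simp: inverts_mat_def)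
  have "B = B * (A * X)" using B by (simp add: AX)
  also have "\<dots> = (B * A) * X" using assoc_mult_mat[OF B A X] by simp
  also have "\<dots> = X" using X by (simp add: BA)
  finally show "B = X" .
qed

lemma inv_U: "mat_inv (Umat n z) = Xi n z"
  by (rule mat_inv_eq[OF Umat_carrier Xi_carrier U_Xi Xi_U])

lemma inv_W: "mat_inv (Wmat n z) = transpose_mat (Xi n z)"
proof (rule mat_inv_eq[OF Wmat_carrier transpose_carrier_mat[THEN iffD2, OF Xi_carrier]])
  show "Wmat n z * transpose_mat (Xi n z) = 1\<^sub>m n"
    unfolding Wmat_def using transpose_mult[OF Xi_carrier Umat_carrier, of n z z] Xi_U by simp
  show "transpose_mat (Xi n z) * Wmat n z = 1\<^sub>m n"
    unfolding Wmat_def using transpose_mult[OF Umat_carrier Xi_carrier, of n z z] U_Xi by simp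
qed

lemma Xi_Ut: "Xi n z * Ut n z = Dinv n"
proof -
  have "Xi n z * Ut n z = Dinv n * (Ut n (-z) * Ut n z)"
    unfolding Xi_def by (rule assoc_mult_mat[OF Dinv_carrier Ut_carrier Ut_carrier])
  also have "\<dots> = Dinv n" using Dinv_carrier[of n] by (simp add: Ut_mult Ut0)
  finally show ?thesis .
qed

lemma Wt_XiT: "Wt n z * transpose_mat (Xi n z) = Dinv n"
proof -
  have "Wt n z * transpose_mat (Xi n z) = transpose_mat (Xi n z * Ut n z)"
    unfolding Wt_def by (rule transpose_mult[OF Xi_carrier Ut_carrier, symmetric])
  also have "\<dots> = Dinv n" by (simp add: Xi_Ut Dinv_def diagm_transpose)
  finally show ?thesis .
qed

lemma P4:
  assumes q: "q > 0" and r: "r > 0"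
  shows "Ncal q r m n z = kron (mat_inv (Umat m z)) (Umat q z) * Acal q r m n z * kron (mat_inv (Wmat n z)) (Wmat r z)"
proof -
  have K12: "kron (Xi m z) (Umat q z) * kron (Ut m z) (1\<^sub>m q) = kron (Dinv m) (Umat q z)"
    by (simp add: kron_mult[OF Xi_carrier Umat_carrier Ut_carrier one_carrier_mat q q q] Xi_Ut)
  have K34: "kron (Wt n z) (1\<^sub>m r) * kron (transpose_mat (Xi n z)) (Wmat r z) = kron (Dinv n) (Wmat r z)"
    by (simp add: kron_mult[OF Wt_carrier one_carrier_mat transpose_carrier_mat[THEN iffD2, OF Xi_carrier] Wmat_carrier r r r] Wt_XiT)
  have "kron (mat_inv (Umat m z)) (Umat q z) * Acal q r m n z * kron (mat_inv (Wmat n z)) (Wmat r z)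
     = kron (Xi m z) (Umat q z) * (kron (Ut m z) (1\<^sub>m q) * Acal q r m n 0 * kron (Wt n z) (1\<^sub>m r)) * kron (transpose_mat (Xi n z)) (Wmat r z)"
    by (simp only: P1[OF q r, of m n z, symmetric] inv_U inv_W)
  also have "\<dots> = (kron (Xi m z) (Umat q z) * kron (Ut m z) (1\<^sub>m q)) * Acal q r m n 0 * (kron (Wt n z) (1\<^sub>m r) * kron (transpose_mat (Xi n z)) (Wmat r z))"
    by (rule assoc5[OF kron_carrier[OF Xi_carrier Umat_carrier] kron_carrier[OF Ut_carrier one_carrier_mat] Acal_carrier
        kron_carrier[OF Wt_carrier one_carrier_mat] kron_carrier[OF transpose_carrier_mat[THEN iffD2, OF Xi_carrier] Wmat_carrier]])
  also have "\<dots> = kron (Dinv m) (Umat q z) * Acal q r m n 0 * kron (Dinv n) (Wmat r z)"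
    by (simp only: K12 K34)
  also have "\<dots> = block_mat m n q r (\<lambda>i j. mat q r (\<lambda>(a,b). 1 / of_nat (fact i) * (1 / of_nat (fact j)) * (Umat q z * Amat q r (i+j) 0 * Wmat r z) $$ (a,b)))"
    unfolding Acal_def Dinv_def by (rule kron_diag_block[OF Umat_carrier Wmat_carrier q q r r]) (rule Amat_carrier)
  also have "\<dots> = Ncal q r m n z"
    unfolding Ncal_def
  proof (rule block_mat_cong)
    fix i j a b assume ij: "i < m" "j < n" "a < q" "b < r"
    show "mat q r (\<lambda>(a,b). 1 / of_nat (fact i) * (1 / of_nat (fact j)) * (Umat q z * Amat q r (i+j) 0 * Wmat r z) $$ (a,b)) $$ (a,b)
       = ((1 / (of_nat (fact i) * of_nat (fact j))) \<cdot>\<^sub>m Mder q r (i+j) z) $$ (a,b)"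
      using ij core_U[OF ij(3,4), of z "i+j"] by simp
  qed
  finally show ?thesis by simp
qed


theorem proposition3p5:
  fixes q r \<mu> \<nu> :: nat and z :: complex
  assumes "q > 0" "r > 0" "\<mu> > 0" "\<nu> > 0"
  shows "Acal q r \<mu> \<nu> z = kron (Ut \<mu> z) (1\<^sub>m q) * Acal q r \<mu> \<nu> 0 * kron (Wt \<nu> z) (1\<^sub>m r) \<and>
    Mcal q r \<mu> \<nu> z = kron (1\<^sub>m \<mu>) (Ut q z) * Mcal q r \<mu> \<nu> 0 * kron (1\<^sub>m \<nu>) (Wt r z) \<and>
    Mcal q r \<mu> \<nu> z = kron (Ut \<mu> (-z)) (Umat q z) * Acal q r \<mu> \<nu> z * kron (Wt \<nu> (-z)) (Wmat r z) \<and>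
    Ncal q r \<mu> \<nu> z = kron (mat_inv (Umat \<mu> z)) (Umat q z) * Acal q r \<mu> \<nu> z * kron (mat_inv (Wmat \<nu> z)) (Wmat r z) \<and>
    Ncal q r \<mu> \<nu> z = kron (1\<^sub>m \<mu>) (Ut q z) * Ncal q r \<mu> \<nu> 0 * kron (1\<^sub>m \<nu>) (Wt r z)"
  using P1[OF assms(1,2)] P2[OF assms(1,2)] P3[OF assms(1,2)] P4[OF assms(1,2)] P5[OF assms(1,2)] by blast

end
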